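(* Fix real parameters $\ell>0$, $\ell_0\in(0,\ell)$, $\rho>0$, $EI>0$, $m>0$, $\varkappa>0$, $d>0$. Let $s\in\mathbb{C}\setminus\{0\}$ be such that the $4\times4$ matrix $\tilde M=\tilde M(s)$ defined in the context is invertible; write $\tilde M^{-1}=(\tilde M^{-1}_{ij})_{i,j=1}^4$. Let $U\in\mathbb{C}$. Suppose $W:[0,\ell]\to\mathbb{C}$ has restrictions to $[0,\ell_0]$ and $[\ell_0,\ell]$ that are four times continuously differentiable (derivatives at $\ell_0$ one-sided, denoted by arguments $\ell_0\mp 0$), satisfying on $(0,\ell_0)$ and $(\ell_0,\ell)$ $$s^2W(x)+\frac{EI}{\rho}W^{(4)}(x)=0,$$ the boundary conditions $W(0)=W(\ell)=0$, $W''(0)=W''(\ell)=0$, and the interface conditions $W^{(j)}(\ell_0-0)=W^{(j)}(\ell_0+0)$ for $j=0,1,2$ and $$(ms^2+ds+\varkappa)W(\ell_0)=EI\big(W'''(\ell_0-0)-W'''(\ell_0+0)\big)+U.$$ Then for every $\ell_k\in[0,\ell]$ one has $W(\ell_k)=\tilde H_1(s)U$ and $W''(\ell_k)=\tilde H_2(s)U$, where $$\tilde H_1(s)=\begin{cases}\frac1{EI}\Big(\tilde z_2(\ell_k,s)\tilde M^{-1}_{14}+\tilde z_4(\ell_k,s)\tilde M^{-1}_{24}\Big),&\ell_k\in[0,\ell_0],\\[4pt] \frac1{EI}\Big(\tilde z_2(\ell_k-\ell,s)\tilde M^{-1}_{34}+\tilde z_4(\ell_k-\ell,s)\tilde M^{-1}_{44}\Big),&\ell_k\in(\ell_0,\ell],\end{cases}$$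 $$\tilde H_2(s)=\begin{cases}\frac1{EI}\Big(\gamma^4\tilde z_4(\ell_k,s)\tilde M^{-1}_{14}+\tilde z_2(\ell_k,s)\tilde M^{-1}_{24}\Big),&\ell_k\in[0,\ell_0],\\[4pt] \frac1{EI}\Big(\gamma^4\tilde z_4(\ell_k-\ell,s)\tilde M^{-1}_{34}+\tilde z_2(\ell_k-\ell,s)\tilde M^{-1}_{44}\Big),&\ell_k\in(\ell_0,\ell].\end{cases}$$ That is, $\tilde H_1,\tilde H_2$ are the transfer functions of the damped Euler–Bernoulli beam with attached mass, with outputs $w(\ell_k,t)$ and $w''(\ell_k,t)$.
   Context: This is the Laplace transform (zero initial data, Laplace variable $s$) of the simply supported Euler–Bernoulli beam $\ddot w+\frac{EI}{\rho}w^{(4)}=0$ on $[0,\ell]$ with $w=w''=0$ at $x=0,\ell$, continuity of $w,w',w''$ at $\ell_0$, and $(m\ddot w+\varkappa w+d\dot w)|_{x=\ell_0}=EI(w'''|_{\ell_0-0}-w'''|_{\ell_0+0})+F_0$; $W,U$ are the Laplace transforms of $w,F_0$. Parameters: $\rho$ linear density, $EI$ bending stiffness, $m$ attached mass, $\varkappa$ spring stiffness, $d$ damping coefficient. Notation: $\gamma$ is the principal value of $\sqrt[4]{-\rho s^2/(EI)}$, so $\gamma^4=-\rho s^2/(EI)$. For $x\in\mathbb{R}$: $\tilde z_1(x,s)=\cosh\gamma x+\cos\gamma x$, $\tilde z_2(x,s)=\frac1\gamma(\sinh\gamma x+\sin\gamma x)$, $\tilde z_3(x,s)=\frac1{\gamma^2}(\cosh\gamma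 x-\cos\gamma x)$, $\tilde z_4(x,s)=\frac1{\gamma^3}(\sinh\gamma x-\sin\gamma x)$. Let $\tilde v=\frac{ms^2+ds+\varkappa}{EI}$ and write $\tilde z_j^0=\tilde z_j(\ell_0,s)$, $\tilde z_j^-=\tilde z_j(\ell_0-\ell,s)$. The matrix $\tilde M$ has rows Row 1: $\big(\tilde z_2^0,\;\tilde z_4^0,\;-\tilde z_2^-,\;-\tilde z_4^-\big)$; Row 2: $\big(\tilde z_1^0,\;\tilde z_3^0,\;-\tilde z_1^-,\;-\tilde z_3^-\big)$; Row 3: $\big(\gamma^4\tilde z_4^0,\;\tilde z_2^0,\;-\gamma^4\tilde z_4^-,\;-\tilde z_2^-\big)$; Row 4: $\big(\tilde v\tilde z_2^0-\gamma^4\tilde z_3^0,\;\tilde v\tilde z_4^0-\tilde z_1^0,\;\gamma^4\tilde z_3^-,\;\tilde z_1^-\big)$. *)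

theory Defs
  imports "HOL-Analysis.Analysis"
begin

definition gam :: "real \<Rightarrow> real \<Rightarrow> complex \<Rightarrow> complex" where
  "gam rho EI s = (- (complex_of_real rho) * s\<^sup>2 / complex_of_real EI) powr (1/4)"

definition z1 :: "complex \<Rightarrow> real \<Rightarrow> complex" where
  "z1 g x = cosh (g * of_real x) + cos (g * of_real x)"
definition z2 :: "complex \<Rightarrow> real \<Rightarrow> complex" where
  "z2 g x = (sinh (g * of_real x) + sin (g * of_real x)) / g"
definition z3 :: "complex \<Rightarrow> real \<Rightarrow> complex" where
  "z3 g x = (cosh (g * of_real x) - cos (g * of_real x)) / g\<^sup>2"
definition z4 :: "complex \<Rightarrow> real \<Rightarrow> complex" where
  "z4 g x = (sinh (g * of_real x) - sin (g * of_real x)) / g^3"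

text \<open>A 4x4 matrix from its rows; index 4 of type 4 is the fourth element.\<close>
definition mat4 :: "complex list list \<Rightarrow> complex^4^4" where
  "mat4 rs = (\<chi> i j. rs ! (if i = 1 then 0 else if i = 2 then 1 else if i = 3 then 2 else 3)
                             ! (if j = 1 then 0 else if j = 2 then 1 else if j = 3 then 2 else 3))"

definition Mt :: "real \<Rightarrow> real \<Rightarrow> real \<Rightarrow> real \<Rightarrow> real \<Rightarrow> real \<Rightarrow> real \<Rightarrow> complex \<Rightarrow> complex^4^4" where
  "Mt l l0 rho EI m kappa d s =
    (let g = gam rho EI s;
         v = (complex_of_real m * s\<^sup>2 + complex_of_real d * s + complex_of_real kappa) / complex_of_real EI;
         a = l0; b = l0 - l
     in mat4
      [[z2 g a, z4 g a, - z2 g b, - z4 g b],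
       [z1 g a, z3 g a, - z1 g b, - z3 g b],
       [g^4 * z4 g a, z2 g a, - (g^4 * z4 g b), - z2 g b],
       [v * z2 g a - g^4 * z3 g a, v * z4 g a - z1 g a, g^4 * z3 g b, z1 g b]])"

definition H1 :: "real \<Rightarrow> real \<Rightarrow> real \<Rightarrow> real \<Rightarrow> real \<Rightarrow> real \<Rightarrow> real \<Rightarrow> real \<Rightarrow> complex \<Rightarrow> complex" where
  "H1 l l0 rho EI m kappa d lk s =
    (let g = gam rho EI s; Mi = matrix_inv (Mt l l0 rho EI m kappa d s) in
     if lk \<le> l0 then (z2 g lk * Mi$1$4 + z4 g lk * Mi$2$4) / complex_of_real EI
     else (z2 g (lk - l) * Mi$3$4 + z4 g (lk - l) * Mi$4$4) / complex_of_real EI)"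

definition H2 :: "real \<Rightarrow> real \<Rightarrow> real \<Rightarrow> real \<Rightarrow> real \<Rightarrow> real \<Rightarrow> real \<Rightarrow> real \<Rightarrow> complex \<Rightarrow> complex" where
  "H2 l l0 rho EI m kappa d lk s =
    (let g = gam rho EI s; Mi = matrix_inv (Mt l l0 rho EI m kappa d s) in
     if lk \<le> l0 then (g^4 * z4 g lk * Mi$1$4 + z2 g lk * Mi$2$4) / complex_of_real EI
     else (g^4 * z4 g (lk - l) * Mi$3$4 + z2 g (lk - l) * Mi$4$4) / complex_of_real EI)"

end

theory Submission imports Defs begin


definition ZZ1 :: "complex \<Rightarrow> complex \<Rightarrow> complex" where
  "ZZ1 g w = cosh (g * w) + cos (g * w)"
definition ZZ2 :: "complex \<Rightarrow> complex \<Rightarrow> complex" where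
  "ZZ2 g w = (sinh (g * w) + sin (g * w)) / g"
definition ZZ3 :: "complex \<Rightarrow> complex \<Rightarrow> complex" where
  "ZZ3 g w = (cosh (g * w) - cos (g * w)) / g\<^sup>2"
definition ZZ4 :: "complex \<Rightarrow> complex \<Rightarrow> complex" where
  "ZZ4 g w = (sinh (g * w) - sin (g * w)) / g^3"

lemma ZZ1_der: "g \<noteq> 0 \<Longrightarrow> (ZZ1 g has_field_derivative g^4 * ZZ4 g w) (at w)"
  unfolding ZZ1_def ZZ4_def
  by (auto intro!: derivative_eq_intros simp: field_simps power_eq_if)
lemma ZZ2_der: "g \<noteq> 0 \<Longrightarrow> (ZZ2 g has_field_derivative ZZ1 g w) (at w)"
  unfolding ZZ1_def ZZ2_def
  by (auto intro!: derivative_eq_intros simp: field_simps power_eq_if)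
lemma ZZ3_der: "g \<noteq> 0 \<Longrightarrow> (ZZ3 g has_field_derivative ZZ2 g w) (at w)"
  unfolding ZZ3_def ZZ2_def
  by (auto intro!: derivative_eq_intros simp: field_simps power_eq_if)
lemma ZZ4_der: "g \<noteq> 0 \<Longrightarrow> (ZZ4 g has_field_derivative ZZ3 g w) (at w)"
  unfolding ZZ3_def ZZ4_def
  by (auto intro!: derivative_eq_intros simp: field_simps power_eq_if)

lemma ZZ_0: "ZZ1 g 0 = 2" "ZZ2 g 0 = 0" "ZZ3 g 0 = 0" "ZZ4 g 0 = 0"
  by (simp_all add: ZZ1_def ZZ2_def ZZ3_def ZZ4_def)
lemma ZZ_minus: "ZZ1 g (-w) = ZZ1 g w" "ZZ2 g (-w) = - ZZ2 g w" "ZZ3 g (-w) = ZZ3 g w" "ZZ4 g (-w) = - ZZ4 g w"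
  by (simp_all add: ZZ1_def ZZ2_def ZZ3_def ZZ4_def add_divide_distrib diff_divide_distrib)

lemma real_chain:
  fixes F F' :: "complex \<Rightarrow> complex" and c t :: real
  assumes "\<And>w. (F has_field_derivative F' w) (at w)"
  shows "((\<lambda>t. F (of_real t - of_real c)) has_vector_derivative F' (of_real t - of_real c)) (at t)"
proof -
  have "((\<lambda>t. of_real t - of_real c :: complex) has_vector_derivative 1) (at t)"
    by (auto intro!: derivative_eq_intros)
  from field_vector_diff_chain_at[OF this assms[of "of_real t - of_real c"]]
  show ?thesis by (simp add: o_def)
qed

lemma gam4: assumes "rho > 0" "EI > 0" "s \<noteq> 0"
  shows "gam rho EI s ^ 4 = - (complex_of_real rho) * s\<^sup>2 / complex_of_real EI"
    "gam rho EI s \<noteq> 0"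
proof -
  let ?z = "- (complex_of_real rho) * s\<^sup>2 / complex_of_real EI"
  have z: "?z \<noteq> 0" using assms by simp
  have "gam rho EI s = exp (1/4 * ln ?z)" using z by (simp add: gam_def powr_def)
  then have "gam rho EI s ^ 4 = exp (of_nat 4 * (1/4 * ln ?z))" by (simp only: exp_of_nat_mult)
  also have "\<dots> = ?z" using z by simp
  finally show "gam rho EI s ^ 4 = ?z" .
  show "gam rho EI s \<noteq> 0" using z by (simp add: gam_def powr_def)
qed

lemma inv_left: "invertible A \<Longrightarrow> matrix_inv A ** A = mat 1"
  unfolding invertible_def matrix_inv_def by (rule someI2_ex) auto


lemma concomitant:
  fixes f y :: "nat \<Rightarrow> real \<Rightarrow> complex" and G :: complex
  assumes fd: "\<forall>j<4. \<forall>x\<in>{lo..hi}. (f j has_vector_derivative f (Suc j) x) (at x within {lo..hi})"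
    and ode: "\<forall>x\<in>{lo<..<hi}. f 4 x = G * f 0 x"
    and yd: "\<forall>j<4. \<forall>x. (y j has_vector_derivative y (Suc j) x) (at x)"
    and y4: "\<forall>x. y 4 x = G * y 0 x"
    and p: "p \<in> {lo..hi}" and x: "x \<in> {lo..hi}"
  shows "f 0 x * y 3 x - f 1 x * y 2 x + f 2 x * y 1 x - f 3 x * y 0 x
       = f 0 p * y 3 p - f 1 p * y 2 p + f 2 p * y 1 p - f 3 p * y 0 p"
proof -
  define B where "B t = f 0 t * y 3 t - f 1 t * y 2 t + f 2 t * y 1 t - f 3 t * y 0 t" for t
  have fd': "(f j has_vector_derivative f (Suc j) t) (at t within {lo..hi})" if "j < 4" "t \<in> {lo..hi}" for j t
    using fd that by blast
  have yd': "(y j has_vector_derivative y (Suc j) t) (at t within {lo..hi})" if "j < 4" for j t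
    using yd that has_vector_derivative_at_within by blast
  have Bd: "(B has_vector_derivative
      (f 0 t * y 4 t + f 1 t * y 3 t - (f 1 t * y 3 t + f 2 t * y 2 t) + (f 2 t * y 2 t + f 3 t * y 1 t)
       - (f 3 t * y 1 t + f 4 t * y 0 t))) (at t within {lo..hi})" if t: "t \<in> {lo..hi}" for t
  proof -
    have F: "(f 0 has_vector_derivative f 1 t) (at t within {lo..hi})"
       "(f 1 has_vector_derivative f 2 t) (at t within {lo..hi})"
       "(f 2 has_vector_derivative f 3 t) (at t within {lo..hi})"
       "(f 3 has_vector_derivative f 4 t) (at t within {lo..hi})"
      using fd'[OF _ t, of 0] fd'[OF _ t, of 1] fd'[OF _ t, of 2] fd'[OF _ t, of 3]
      by (simp_all add: numeral_eq_Suc)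
    have Y: "(y 0 has_vector_derivative y 1 t) (at t within {lo..hi})"
       "(y 1 has_vector_derivative y 2 t) (at t within {lo..hi})"
       "(y 2 has_vector_derivative y 3 t) (at t within {lo..hi})"
       "(y 3 has_vector_derivative y 4 t) (at t within {lo..hi})"
      using yd'[of 0] yd'[of 1] yd'[of 2] yd'[of 3]
      by (simp_all add: numeral_eq_Suc)
    show ?thesis unfolding B_def
      by (intro has_vector_derivative_mult has_vector_derivative_add has_vector_derivative_diff F Y)
  qed
  have cont: "continuous_on {lo..hi} B"
    using Bd by (meson continuous_on_eq_continuous_within has_vector_derivative_continuous)
  have zero: "(B has_derivative (\<lambda>h. 0)) (at t within {lo..hi})" if "t \<in> {lo..hi} - {lo, hi}" for t
  proof -
    have "t \<in> {lo<..<hi}" using that by auto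
    then have "f 4 t = G * f 0 t" using ode by blast
    then have "(B has_vector_derivative 0) (at t within {lo..hi})"
      using Bd[of t] that y4 by (simp add: algebra_simps)
    then show ?thesis by (simp add: has_vector_derivative_def)
  qed
  have "B x = B lo"
    by (rule has_derivative_zero_unique_strong_interval[of "{lo,hi}"]) (use cont zero x in auto)
  moreover have "B p = B lo"
    by (rule has_derivative_zero_unique_strong_interval[of "{lo,hi}"]) (use cont zero p in auto)
  ultimately show ?thesis unfolding B_def by simp
qed


lemma z_ZZ: "z1 g r = ZZ1 g (of_real r)" "z2 g r = ZZ2 g (of_real r)"
  "z3 g r = ZZ3 g (of_real r)" "z4 g r = ZZ4 g (of_real r)"
  by (simp_all add: z1_def z2_def z3_def z4_def ZZ1_def ZZ2_def ZZ3_def ZZ4_def)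

lemma chain_y:
  fixes Y :: "nat \<Rightarrow> complex \<Rightarrow> complex"
  assumes "\<And>j w. j < 4 \<Longrightarrow> (Y j has_field_derivative Y (Suc j) w) (at w)"
  shows "\<forall>j<4. \<forall>t. ((\<lambda>t. Y j (of_real t - of_real c)) has_vector_derivative
          (\<lambda>t. Y (Suc j) (of_real t - of_real c)) t) (at t)"
proof (intro allI impI)
  fix j t assume j: "(j::nat) < 4"
  show "((\<lambda>t. Y j (of_real t - of_real c)) has_vector_derivative
          (\<lambda>t. Y (Suc j) (of_real t - of_real c)) t) (at t)"
    using real_chain[of "Y j" "Y (Suc j)" c t] assms[OF j] by simp
qed

lemma ZZc_der: assumes "g \<noteq> 0"
  shows "((\<lambda>w. g^4 * ZZ1 g w) has_field_derivative g^4 * (g^4 * ZZ4 g w)) (at w)"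
    "((\<lambda>w. g^4 * ZZ2 g w) has_field_derivative g^4 * ZZ1 g w) (at w)"
    "((\<lambda>w. g^4 * ZZ3 g w) has_field_derivative g^4 * ZZ2 g w) (at w)"
    "((\<lambda>w. g^4 * ZZ4 g w) has_field_derivative g^4 * ZZ3 g w) (at w)"
  by (rule DERIV_cmult, rule ZZ1_der ZZ2_der ZZ3_der ZZ4_der, rule assms)+

lemma cases4: assumes "(j::nat) < 4" "j = 0 \<Longrightarrow> P" "j = 1 \<Longrightarrow> P" "j = 2 \<Longrightarrow> P" "j = 3 \<Longrightarrow> P"
  shows P
proof -
  from assms(1) have "j = 0 \<or> j = 1 \<or> j = 2 \<or> j = 3" by linarith
  then show P using assms(2-) by blast
qed

lemma sol:
  fixes f :: "nat \<Rightarrow> real \<Rightarrow> complex" and g :: complex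
  assumes g: "g \<noteq> 0"
    and fd: "\<forall>j<4. \<forall>x\<in>{lo..hi}. (f j has_vector_derivative f (Suc j) x) (at x within {lo..hi})"
    and ode: "\<forall>x\<in>{lo<..<hi}. f 4 x = g^4 * f 0 x"
    and p: "p \<in> {lo..hi}" and f0: "f 0 p = 0" and f2: "f 2 p = 0"
    and x: "x \<in> {lo..hi}"
  shows "f 0 x = f 1 p / 2 * z2 g (x - p) + f 3 p / 2 * z4 g (x - p)"
    "f 1 x = f 1 p / 2 * z1 g (x - p) + f 3 p / 2 * z3 g (x - p)"
    "f 2 x = f 1 p / 2 * (g^4 * z4 g (x - p)) + f 3 p / 2 * z2 g (x - p)"
    "f 3 x = f 1 p / 2 * (g^4 * z3 g (x - p)) + f 3 p / 2 * z1 g (x - p)"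
proof -
  have mx: "of_real p - of_real x = - (of_real (x - p) :: complex)" by simp
  have zm: "ZZ1 g (of_real p - of_real x) = z1 g (x - p)"
    "ZZ2 g (of_real p - of_real x) = - z2 g (x - p)"
    "ZZ3 g (of_real p - of_real x) = z3 g (x - p)"
    "ZZ4 g (of_real p - of_real x) = - z4 g (x - p)"
    unfolding mx ZZ_minus z_ZZ by simp_all
  note c = concomitant[OF fd ode _ _ p x]
  note D = ZZ1_der[OF g] ZZ2_der[OF g] ZZ3_der[OF g] ZZ4_der[OF g] ZZc_der[OF g]
  let ?Y = "\<lambda>k::nat. if k = 0 then ZZ4 g else if k = 1 then ZZ3 g else if k = 2 then ZZ2 g
     else if k = 3 then ZZ1 g else (\<lambda>w. g^4 * ZZ4 g w)"
  have "\<forall>j<4. \<forall>t. ((\<lambda>t. ?Y j (of_real t - of_real x)) has_vector_derivative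
          (\<lambda>t. ?Y (Suc j) (of_real t - of_real x)) t) (at t)"
    by (rule chain_y, erule cases4) (use D in simp_all)
  from c[OF this] have X: "f 0 x * 2 = f 1 p * z2 g (x - p) + f 3 p * z4 g (x - p)"
    by (auto simp: ZZ_0 zm f0 f2)
  then show "f 0 x = f 1 p / 2 * z2 g (x - p) + f 3 p / 2 * z4 g (x - p)" by (simp add: field_simps)

  let ?Y = "\<lambda>k::nat. if k = 0 then ZZ3 g else if k = 1 then ZZ2 g else if k = 2 then ZZ1 g
     else if k = 3 then (\<lambda>w. g^4 * ZZ4 g w) else (\<lambda>w. g^4 * ZZ3 g w)"
  have "\<forall>j<4. \<forall>t. ((\<lambda>t. ?Y j (of_real t - of_real x)) has_vector_derivative
          (\<lambda>t. ?Y (Suc j) (of_real t - of_real x)) t) (at t)"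
    by (rule chain_y, erule cases4) (use D in simp_all)
  from c[OF this] have X: "f 1 x * 2 = f 1 p * z1 g (x - p) + f 3 p * z3 g (x - p)"
    by (auto simp: ZZ_0 zm f0 f2) (simp add: algebra_simps)
  then show "f 1 x = f 1 p / 2 * z1 g (x - p) + f 3 p / 2 * z3 g (x - p)" by (simp add: field_simps)

  let ?Y = "\<lambda>k::nat. if k = 0 then ZZ2 g else if k = 1 then ZZ1 g else if k = 2 then (\<lambda>w. g^4 * ZZ4 g w)
     else if k = 3 then (\<lambda>w. g^4 * ZZ3 g w) else (\<lambda>w. g^4 * ZZ2 g w)"
  have "\<forall>j<4. \<forall>t. ((\<lambda>t. ?Y j (of_real t - of_real x)) has_vector_derivative
          (\<lambda>t. ?Y (Suc j) (of_real t - of_real x)) t) (at t)"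
    by (rule chain_y, erule cases4) (use D in simp_all)
  from c[OF this] have X: "f 2 x * 2 = f 1 p * (g^4 * z4 g (x - p)) + f 3 p * z2 g (x - p)"
    by (auto simp: ZZ_0 zm f0 f2)
  then show "f 2 x = f 1 p / 2 * (g^4 * z4 g (x - p)) + f 3 p / 2 * z2 g (x - p)" by (simp add: field_simps)

  let ?Y = "\<lambda>k::nat. if k = 0 then ZZ1 g else if k = 1 then (\<lambda>w. g^4 * ZZ4 g w) else if k = 2 then (\<lambda>w. g^4 * ZZ3 g w)
     else if k = 3 then (\<lambda>w. g^4 * ZZ2 g w) else (\<lambda>w. g^4 * ZZ1 g w)"
  have "\<forall>j<4. \<forall>t. ((\<lambda>t. ?Y j (of_real t - of_real x)) has_vector_derivative
          (\<lambda>t. ?Y (Suc j) (of_real t - of_real x)) t) (at t)"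
    by (rule chain_y, erule cases4) (use D in simp_all)
  from c[OF this] have X: "f 3 x * 2 = f 1 p * (g^4 * z3 g (x - p)) + f 3 p * z1 g (x - p)"
    by (auto simp: ZZ_0 zm f0 f2) (simp add: algebra_simps)
  then show "f 3 x = f 1 p / 2 * (g^4 * z3 g (x - p)) + f 3 p / 2 * z1 g (x - p)" by (simp add: field_simps)
qed


lemma row4:
  fixes E V A B C Dd G a1 a2 a3 a4 b1 b3 U :: complex
  assumes E: "E \<noteq> 0"
    and h: "V * (A * a2 + B * a4) = E * ((A * (G * a3) + B * a1) - (C * (G * b3) + Dd * b1)) + U"
  shows "(V * a2 / E - G * a3) * A + (V * a4 / E - a1) * B + G * b3 * C + b1 * Dd = U / E"
proof -
  have "(V * a2 / E - G * a3) * A + (V * a4 / E - a1) * B + G * b3 * C + b1 * Dd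
     = (V * (A * a2 + B * a4) - E * (A * (G * a3) + B * a1) + E * (C * (G * b3) + Dd * b1)) / E"
    using E by (simp add: field_simps)
  also have "\<dots> = U / E" unfolding h by (simp add: algebra_simps)
  finally show ?thesis .
qed

theorem proposition2:
  fixes l l0 rho EI m kappa d lk :: real and s U :: complex
    and W :: "real \<Rightarrow> complex"
    and D1 D2 :: "nat \<Rightarrow> real \<Rightarrow> complex"
  assumes "l > 0" "0 < l0" "l0 < l" "rho > 0" "EI > 0" "m > 0" "kappa > 0" "d > 0"
    and "s \<noteq> 0"
    and "invertible (Mt l l0 rho EI m kappa d s)"
    \<comment> \<open>D1 j / D2 j: j-th derivative of W restricted to [0,l0] / [l0,l], C^4 there\<close>
    and "\<forall>x\<in>{0..l0}. D1 0 x = W x"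
    and "\<forall>x\<in>{l0..l}. D2 0 x = W x"
    and "\<forall>j<4. \<forall>x\<in>{0..l0}. (D1 j has_vector_derivative D1 (Suc j) x) (at x within {0..l0})"
    and "\<forall>j<4. \<forall>x\<in>{l0..l}. (D2 j has_vector_derivative D2 (Suc j) x) (at x within {l0..l})"
    and "continuous_on {0..l0} (D1 4)"
    and "continuous_on {l0..l} (D2 4)"
    and "\<forall>x\<in>{0<..<l0}. s\<^sup>2 * D1 0 x + complex_of_real (EI / rho) * D1 4 x = 0"
    and "\<forall>x\<in>{l0<..<l}. s\<^sup>2 * D2 0 x + complex_of_real (EI / rho) * D2 4 x = 0"
    and "W 0 = 0" "W l = 0" "D1 2 0 = 0" "D2 2 l = 0"
    and "\<forall>j\<le>2. D1 j l0 = D2 j l0"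
    and "(complex_of_real m * s\<^sup>2 + complex_of_real d * s + complex_of_real kappa) * W l0
           = complex_of_real EI * (D1 3 l0 - D2 3 l0) + U"
    and "lk \<in> {0..l}"
  shows "W lk = H1 l l0 rho EI m kappa d lk s * U
         \<and> (if lk \<le> l0 then D1 2 lk else D2 2 lk) = H2 l l0 rho EI m kappa d lk s * U"
proof -
  define g where "g = gam rho EI s"
  have g4: "g^4 = - (complex_of_real rho) * s\<^sup>2 / complex_of_real EI" and g0: "g \<noteq> 0"
    using gam4[OF assms(4,5,9)] unfolding g_def by auto
  have EI0: "complex_of_real EI \<noteq> 0" "complex_of_real rho \<noteq> 0" using assms(4,5) by auto
  have ode_gen: "F4 = g^4 * F0" if "s\<^sup>2 * F0 + complex_of_real (EI / rho) * F4 = 0" for F0 F4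
  proof -
    from that have "complex_of_real rho * (s\<^sup>2 * F0) + complex_of_real EI * F4 = 0"
      using EI0 by (simp add: field_simps)
    then have "complex_of_real EI * F4 = - (complex_of_real rho * (s\<^sup>2 * F0))"
      by (simp add: eq_neg_iff_add_eq_0 add.commute)
    then show ?thesis unfolding g4 using EI0 by (simp add: field_simps)
  qed
  have ode1: "\<forall>x\<in>{0<..<l0}. D1 4 x = g^4 * D1 0 x" using assms(17) ode_gen by blast
  have ode2: "\<forall>x\<in>{l0<..<l}. D2 4 x = g^4 * D2 0 x" using assms(18) ode_gen by blast
  have p1: "(0::real) \<in> {0..l0}" "D1 0 0 = 0" using assms(2,11,19) by auto
  have p2: "l \<in> {l0..l}" "D2 0 l = 0" using assms(3,12,20) by auto
  note S1 = sol[OF g0 assms(13) ode1 p1(1) p1(2) assms(21)]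
  note S2 = sol[OF g0 assms(14) ode2 p2(1) p2(2) assms(22)]
  define A where "A = D1 1 0 / 2"
  define B where "B = D1 3 0 / 2"
  define C where "C = D2 1 l / 2"
  define Dd where "Dd = D2 3 l / 2"
  define X where "X = (\<chi> i::4. if i = 1 then A else if i = 2 then B else if i = 3 then C else Dd)"
  define Y where "Y = (\<chi> i::4. if i = 4 then U / complex_of_real EI else 0)"
  let ?M = "Mt l l0 rho EI m kappa d s"
  have "?M *v X = Y"
    unfolding vec_eq_iff forall_4 matrix_vector_mult_def sum_4 Mt_def mat4_def Let_def X_def Y_def
      g_def[symmetric]
  proof (simp, intro conjI)
    have l0a: "l0 \<in> {0..l0}" "l0 \<in> {l0..l}" using assms(2,3) by auto
    have e0: "D1 0 l0 = A * z2 g l0 + B * z4 g l0" "D1 1 l0 = A * z1 g l0 + B * z3 g l0"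
      "D1 2 l0 = A * (g^4 * z4 g l0) + B * z2 g l0" "D1 3 l0 = A * (g^4 * z3 g l0) + B * z1 g l0"
      using S1[OF l0a(1)] unfolding A_def B_def by simp_all
    have e1: "D2 0 l0 = C * z2 g (l0 - l) + Dd * z4 g (l0 - l)" "D2 1 l0 = C * z1 g (l0 - l) + Dd * z3 g (l0 - l)"
      "D2 2 l0 = C * (g^4 * z4 g (l0 - l)) + Dd * z2 g (l0 - l)" "D2 3 l0 = C * (g^4 * z3 g (l0 - l)) + Dd * z1 g (l0 - l)"
      using S2[OF l0a(2)] unfolding C_def Dd_def by simp_all
    have i: "D1 0 l0 = D2 0 l0" "D1 1 l0 = D2 1 l0" "D1 2 l0 = D2 2 l0" using assms(23) by auto
    have W0: "W l0 = D1 0 l0" using assms(11) l0a by auto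
    show "z2 g l0 * A + z4 g l0 * B - z2 g (l0 - l) * C = z4 g (l0 - l) * Dd"
      using i(1) unfolding e0 e1 by (simp add: algebra_simps)
    show "z1 g l0 * A + z3 g l0 * B - z1 g (l0 - l) * C = z3 g (l0 - l) * Dd"
      using i(2) unfolding e0 e1 by (simp add: algebra_simps)
    show "g ^ 4 * z4 g l0 * A + z2 g l0 * B - g ^ 4 * z4 g (l0 - l) * C = z2 g (l0 - l) * Dd"
      using i(3) unfolding e0 e1 by (simp add: algebra_simps)
    show "((complex_of_real m * s\<^sup>2 + complex_of_real d * s + complex_of_real kappa) * z2 g l0 /
      complex_of_real EI - g ^ 4 * z3 g l0) * A +
     ((complex_of_real m * s\<^sup>2 + complex_of_real d * s + complex_of_real kappa) * z4 g l0 /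
      complex_of_real EI - z1 g l0) * B + g ^ 4 * z3 g (l0 - l) * C + z1 g (l0 - l) * Dd =
     U / complex_of_real EI"
      by (rule row4[OF EI0(1)]) (use assms(24) W0 e0 e1 in simp)
  qed
  then have "matrix_inv ?M *v (?M *v X) = matrix_inv ?M *v Y" by simp
  then have XY: "X = matrix_inv ?M *v Y"
    by (simp add: matrix_vector_mul_assoc inv_left[OF assms(10)])
  define Mi where "Mi = matrix_inv ?M"
  have co: "A = Mi$1$4 * (U / complex_of_real EI)" "B = Mi$2$4 * (U / complex_of_real EI)"
    "C = Mi$3$4 * (U / complex_of_real EI)" "Dd = Mi$4$4 * (U / complex_of_real EI)"
    using arg_cong[OF XY, of "\<lambda>v. v$1"] arg_cong[OF XY, of "\<lambda>v. v$2"]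
      arg_cong[OF XY, of "\<lambda>v. v$3"] arg_cong[OF XY, of "\<lambda>v. v$4"]
    unfolding X_def Y_def Mi_def matrix_vector_mult_def sum_4 by simp_all
  show ?thesis
  proof (cases "lk \<le> l0")
    case True
    then have lk: "lk \<in> {0..l0}" using assms(25) by auto
    have "W lk = D1 0 lk" using assms(11) lk by auto
    then show ?thesis using True S1(1)[OF lk] S1(3)[OF lk]
      unfolding H1_def H2_def Let_def g_def[symmetric] Mi_def[symmetric]
        A_def[symmetric] B_def[symmetric] co
      by (simp add: field_simps) (simp add: add_divide_distrib)
  next
    case False
    then have lk: "lk \<in> {l0..l}" using assms(25) by auto
    have "W lk = D2 0 lk" using assms(12) lk by auto
    then show ?thesis using False S2(1)[OF lk] S2(3)[OF lk]
      unfolding H1_def H2_def Let_def g_def[symmetric] Mi_def[symmetric]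
        C_def[symmetric] Dd_def[symmetric] co
      by (simp add: field_simps) (simp add: add_divide_distrib)
  qed
qed
end
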